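(* For every $n\ge5$ and every integer $t$ with $n-2\le t\le \frac{n^2}{8}+\frac{n}{4}-\frac{11}{8}$, there exists an $(n,t)$-blocker.
   Context: For a convex $n$-gon: an edge is a segment between two vertices; diagonals are edges that are not sides of the polygon. Two edges cross if they share an interior point. A triangulation is a maximal set of pairwise non-crossing diagonals. A blocker is a set $B$ of diagonals having a diagonal in common with every triangulation; it is saturated if for every $e\in B$, $B\setminus\{e\}$ is not a blocker. An $(n,t)$-blocker is a saturated blocker of size $t$ for a convex $n$-gon. *)

theory Defs
  imports Complex_Main
begin

text \<open>Convex n-gon with vertices 0, ..., n-1 in cyclic order.
  An edge is an unordered pair of distinct vertices, represented as (i,j) with i < j.\<close>

definition is_edge :: "nat \<Rightarrow> nat \<times> nat \<Rightarrow> bool" where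
  "is_edge n e \<longleftrightarrow> fst e < snd e \<and> snd e < n"

definition is_side :: "nat \<Rightarrow> nat \<times> nat \<Rightarrow> bool" where
  "is_side n e \<longleftrightarrow> is_edge n e \<and> (snd e = fst e + 1 \<or> (fst e = 0 \<and> snd e = n - 1))"

definition diagonals :: "nat \<Rightarrow> (nat \<times> nat) set" where
  "diagonals n = {e. is_edge n e \<and> \<not> is_side n e}"

text \<open>In a convex polygon two distinct edges share an interior point iff their
  endpoints strictly interleave.\<close>
definition crosses :: "nat \<times> nat \<Rightarrow> nat \<times> nat \<Rightarrow> bool" where
  "crosses e f \<longleftrightarrow>
     (fst e < fst f \<and> fst f < snd e \<and> snd e < snd f) \<or>
     (fst f < fst e \<and> fst e < snd f \<and> snd f < snd e)"

definition noncrossing :: "(nat \<times> nat) set \<Rightarrow> bool" where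
  "noncrossing S \<longleftrightarrow> (\<forall>e\<in>S. \<forall>f\<in>S. \<not> crosses e f)"

definition triangulation :: "nat \<Rightarrow> (nat \<times> nat) set \<Rightarrow> bool" where
  "triangulation n T \<longleftrightarrow> T \<subseteq> diagonals n \<and> noncrossing T \<and>
     (\<forall>S. T \<subset> S \<and> S \<subseteq> diagonals n \<longrightarrow> \<not> noncrossing S)"

definition blocker :: "nat \<Rightarrow> (nat \<times> nat) set \<Rightarrow> bool" where
  "blocker n B \<longleftrightarrow> B \<subseteq> diagonals n \<and> (\<forall>T. triangulation n T \<longrightarrow> B \<inter> T \<noteq> {})"

definition saturated_blocker :: "nat \<Rightarrow> (nat \<times> nat) set \<Rightarrow> bool" where
  "saturated_blocker n B \<longleftrightarrow> blocker n B \<and> (\<forall>e\<in>B. \<not> blocker n (B - {e}))"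

definition nt_blocker :: "nat \<Rightarrow> nat \<Rightarrow> (nat \<times> nat) set \<Rightarrow> bool" where
  "nt_blocker n t B \<longleftrightarrow> saturated_blocker n B \<and> finite B \<and> card B = t"

end

theory Submission
  imports Defs
begin


lemma diag_iff: "(a,b) \<in> diagonals n \<longleftrightarrow> a < b \<and> b < n \<and> b \<noteq> a+1 \<and> \<not>(a = 0 \<and> b = n-1)"
  by (auto simp: diagonals_def is_edge_def is_side_def)

lemma side_iff: "is_side n (a,b) \<longleftrightarrow> a < b \<and> b < n \<and> (b = a+1 \<or> (a = 0 \<and> b = n-1))"
  by (auto simp: is_edge_def is_side_def)

lemma crosses_pair: "crosses (a,b) (c,d) \<longleftrightarrow> (a < c \<and> c < b \<and> b < d) \<or> (c < a \<and> a < d \<and> d < b)"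
  by (simp add: crosses_def)

lemma crosses_sym: "crosses e f = crosses f e" by (auto simp: crosses_def)
lemma crosses_irrefl: "\<not> crosses e e" by (auto simp: crosses_def)

lemma finite_diagonals: "finite (diagonals n)"
proof -
  have "diagonals n \<subseteq> {..<n} \<times> {..<n}" by (auto simp: diagonals_def is_edge_def)
  thus ?thesis by (rule finite_subset) auto
qed

lemma extend_triangulation:
  assumes "N \<subseteq> diagonals n" "noncrossing N"
  shows "\<exists>T. triangulation n T \<and> N \<subseteq> T"
proof -
  let ?F = "{S. N \<subseteq> S \<and> S \<subseteq> diagonals n \<and> noncrossing S}"
  have fin: "finite ?F"
    by (rule finite_subset[of _ "Pow (diagonals n)"]) (auto simp: finite_diagonals)
  have ne: "N \<in> ?F" using assms by auto
  obtain T where T: "T \<in> ?F" "\<forall>S\<in>?F. T \<le> S \<longrightarrow> T = S"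
    using finite_has_maximal[OF fin] ne by blast
  have "triangulation n T"
    unfolding triangulation_def
  proof (intro conjI allI impI)
    show "T \<subseteq> diagonals n" "noncrossing T" using T(1) by auto
    fix S assume S: "T \<subset> S \<and> S \<subseteq> diagonals n"
    show "\<not> noncrossing S"
    proof
      assume "noncrossing S"
      then have "S \<in> ?F" using S T(1) by auto
      then show False using T(2) S by auto
    qed
  qed
  then show ?thesis using T(1) by auto
qed

lemma tri_cross:
  assumes "triangulation n T" "d \<in> diagonals n" "d \<notin> T"
  shows "\<exists>f\<in>T. crosses d f"
proof -
  have "T \<subset> insert d T" "insert d T \<subseteq> diagonals n" using assms by (auto simp: triangulation_def)
  then have "\<not> noncrossing (insert d T)" using assms(1) unfolding triangulation_def by blast
  then obtain e f where ef: "e \<in> insert d T" "f \<in> insert d T" "crosses e f"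
    unfolding noncrossing_def by blast
  have nc: "noncrossing T" using assms(1) by (simp add: triangulation_def)
  show ?thesis
    using ef nc crosses_irrefl crosses_sym unfolding noncrossing_def by blast
qed

definition ET :: "nat \<Rightarrow> (nat \<times> nat) set \<Rightarrow> nat \<Rightarrow> nat \<Rightarrow> bool" where
  "ET n T a b \<longleftrightarrow> (a,b) \<in> T \<or> is_side n (a,b)"

lemma tri_noncross:
  assumes "triangulation n T" "e \<in> T" "f \<in> T" shows "\<not> crosses e f"
  using assms by (auto simp: triangulation_def noncrossing_def)

lemma tri_diag:
  assumes "triangulation n T" "(a,b) \<in> T" shows "(a,b) \<in> diagonals n"
  using assms by (auto simp: triangulation_def)

lemma inner_triangle:
  assumes T: "triangulation n T" and E: "ET n T x y" and xy: "x + 2 \<le> y" "y < n"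
  shows "\<exists>w. x < w \<and> w < y \<and> ET n T x w \<and> ET n T w y"
proof -
  let ?W = "{w. x < w \<and> w < y \<and> ET n T x w}"
  have "x+1 \<in> ?W" using xy by (auto simp: ET_def side_iff)
  have finW: "finite ?W" by (rule finite_subset[of _ "{..<y}"]) auto
  define w where "w = Max ?W"
  have wW: "w \<in> ?W" unfolding w_def by (rule Max_in[OF finW]) (use \<open>x+1 \<in> ?W\<close> in blast)
  have wmax: "\<And>v. v \<in> ?W \<Longrightarrow> v \<le> w" unfolding w_def using finW by simp
  have "ET n T w y"
  proof (cases "y = w + 1")
    case True then show ?thesis using wW xy by (auto simp: ET_def side_iff)
  next
    case False
    show ?thesis
    proof (rule ccontr)
      assume nE: "\<not> ET n T w y"
      have d: "(w,y) \<in> diagonals n" using False wW xy by (auto simp: diag_iff)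
      have "(w,y) \<notin> T" using nE by (simp add: ET_def)
      then obtain g1 g2 where g: "(g1,g2) \<in> T" "crosses (w,y) (g1,g2)"
        using tri_cross[OF T d] by auto
      have gd: "g1 < g2" "g2 < n" using tri_diag[OF T g(1)] by (auto simp: diag_iff)
      have cxy: "\<not> crosses (x,y) (g1,g2)" if "(x,y) \<in> T"
        using tri_noncross[OF T that g(1)] .
      have sxy: "is_side n (x,y) \<Longrightarrow> x = 0 \<and> y = n - 1" using xy by (auto simp: side_iff)
      from g(2) consider "w < g1 \<and> g1 < y \<and> y < g2" | "g1 < w \<and> w < g2 \<and> g2 < y"
        by (auto simp: crosses_pair)
      then show False
      proof cases
        case 1
        then show ?thesis using E cxy sxy wW gd by (auto simp: ET_def crosses_pair)
      next
        case 2
        consider "g1 < x" | "g1 = x" | "x < g1" by linarith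
        then show ?thesis
        proof cases
          case 1
          then show ?thesis using 2 E cxy sxy wW gd by (auto simp: ET_def crosses_pair)
        next
          case 3
          have "\<not> crosses (x,w) (g1,g2)" if "(x,w) \<in> T"
            using tri_noncross[OF T that g(1)] .
          moreover have "is_side n (x,w) \<Longrightarrow> w = x + 1" using xy wW by (auto simp: side_iff)
          ultimately show ?thesis using 2 3 wW by (auto simp: ET_def crosses_pair)
        next
          case g1x: 2
          have "g2 \<in> ?W" using g(1) g1x 2 wW by (auto simp: ET_def)
          then show ?thesis using wmax 2 by fastforce
        qed
      qed
    qed
  qed
  then show ?thesis using wW by auto
qed



definition Cset :: "nat \<Rightarrow> nat \<Rightarrow> nat \<Rightarrow> nat \<Rightarrow> (nat \<times> nat) set" where
  "Cset n p k q = {(i,j). i < p \<and> k \<le> j \<and> j < q} \<union> {(i,j). p \<le> i \<and> i < k \<and> q \<le> j \<and> j < n}"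

lemma C_diag:
  assumes "1 \<le> p" "p < k" "k < q" "q < n"
  shows "Cset n p k q \<subseteq> diagonals n"
  using assms by (auto simp: Cset_def diag_iff)

lemma C_card:
  assumes "1 \<le> p" "p < k" "k < q" "q < n"
  shows "card (Cset n p k q) = p * (q - k) + (k - p) * (n - q)"
proof -
  have "Cset n p k q = ({..<p} \<times> {k..<q}) \<union> ({p..<k} \<times> {q..<n})"
    by (auto simp: Cset_def)
  moreover have "({..<p} \<times> {k..<q}) \<inter> ({p..<k} \<times> {q..<n}) = {}" by auto
  ultimately show ?thesis
    by (simp add: card_Un_disjoint card_cartesian_product)
qed

lemma C_blocker:
  assumes "1 \<le> p" "p < k" "k < q" "q < n"
  shows "blocker n (Cset n p k q)"
  unfolding blocker_def
proof (intro conjI allI impI)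
  show "Cset n p k q \<subseteq> diagonals n" using C_diag[OF assms] .
  fix T assume T: "triangulation n T"
  show "Cset n p k q \<inter> T \<noteq> {}"
  proof
    assume disj: "Cset n p k q \<inter> T = {}"
    have key: "\<forall>i j. j - i = d \<longrightarrow> i < p \<longrightarrow> q \<le> j \<longrightarrow> j < n \<longrightarrow> ET n T i j \<longrightarrow> False" for d
    proof (induction d rule: less_induct)
      case (less d)
      show ?case
      proof (intro allI impI)
        fix i j assume h: "j - i = d" "i < p" "q \<le> j" "j < n" "ET n T i j"
        have "i + 2 \<le> j" using h assms by linarith
        then obtain w where w: "i < w" "w < j" "ET n T i w" "ET n T w j"
          using inner_triangle[OF T h(5) _ h(4)] by blast
        consider "w < p" | "p \<le> w \<and> w < k" | "k \<le> w \<and> w < q" | "q \<le> w" by linarith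
        then show False
        proof cases
          case 1
          then show ?thesis using less.IH[of "j - w"] h w by auto
        next
          case 2
          then have "(w,j) \<in> Cset n p k q" using h by (auto simp: Cset_def)
          moreover have "(w,j) \<in> T" using w(4) 2 h assms by (auto simp: ET_def side_iff)
          ultimately show ?thesis using disj by auto
        next
          case 3
          then have "(i,w) \<in> Cset n p k q" using h by (auto simp: Cset_def)
          moreover have "(i,w) \<in> T" using w(3) 3 h assms by (auto simp: ET_def side_iff)
          ultimately show ?thesis using disj by auto
        next
          case 4
          then show ?thesis using less.IH[of "w - i"] h w by auto
        qed
      qed
    qed
    have "ET n T 0 (n-1)" using assms by (auto simp: ET_def side_iff)
    then show False using key[of "n - 1 - 0"] assms by auto
  qed
qed



lemma not_blocker_witness:
  assumes "N \<subseteq> diagonals n" "noncrossing N"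
    and "\<forall>f\<in>B. \<exists>g\<in>N. crosses f g"
  shows "\<not> blocker n B"
proof -
  obtain T where T: "triangulation n T" "N \<subseteq> T" using extend_triangulation[OF assms(1,2)] by blast
  have "B \<inter> T = {}"
  proof (rule ccontr)
    assume "B \<inter> T \<noteq> {}"
    then obtain f where f: "f \<in> B" "f \<in> T" by auto
    then obtain g where "g \<in> N" "crosses f g" using assms(3) by blast
    then show False using tri_noncross[OF T(1) f(2), of g] T(2) by auto
  qed
  then show ?thesis using T(1) by (auto simp: blocker_def)
qed

lemma sat1:
  assumes "1 \<le> p" "p < k" "k < q" "q < n" "i < p" "k \<le> j" "j < q"
  shows "\<not> blocker n (Cset n p k q - {(i,j)})"
proof -
  define NN where "NN = {(0,i),(i,k-1),(k,j),(j,n-1),(i,n-1),(i,j),(k-1,j)}"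
  define N where "N = NN \<inter> diagonals n"
  have "N \<subseteq> diagonals n" by (auto simp: N_def)
  moreover have "noncrossing N"
  proof -
    have "noncrossing NN" using assms unfolding NN_def noncrossing_def ball_simps crosses_pair
      by (intro conjI; arith)
    then show ?thesis by (auto simp: N_def noncrossing_def)
  qed
  moreover have "\<forall>f\<in>Cset n p k q - {(i,j)}. \<exists>g\<in>N. crosses f g"
  proof
    fix f assume f: "f \<in> Cset n p k q - {(i,j)}"
    obtain a b where ab: "f = (a,b)" by force
    have h: "a < k" "k \<le> b" "b < n" "(a,b) \<noteq> (i,j)" "a < p \<and> b < q \<or> p \<le> a \<and> q \<le> b"
      using f ab assms by (auto simp: Cset_def)
    have wit: "\<exists>g\<in>N. crosses (a,b) g" if "g \<in> NN" "g \<in> diagonals n" "crosses (a,b) g" for g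
      using that by (auto simp: N_def)
    have "\<exists>g\<in>N. crosses (a,b) g"
    proof -
      note c = TrueI
      show ?thesis
      proof (cases "a < i")
        case True
        note c = c True
        show ?thesis
          proof (cases "b < n - 1")
            case True
            note c = c True
            show ?thesis
              by (rule wit[of "(i,n-1)"]) (use h assms c in \<open>auto simp: NN_def diag_iff crosses_pair\<close>)
          next
            case False
            note c = c False
            show ?thesis
              by (rule wit[of "(0,i)"]) (use h assms c in \<open>auto simp: NN_def diag_iff crosses_pair\<close>)
          qed
      next
        case False
        note c = c False
        show ?thesis
          proof (cases "a = i")
            case True
            note c = c True
            show ?thesis
              proof (cases "b < j")
                case True
                note c = c True
                show ?thesis
                  by (rule wit[of "(k-1,j)"]) (use h assms c in \<open>auto simp: NN_def diag_iff crosses_pair\<close>)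
              next
                case False
                note c = c False
                show ?thesis
                  by (rule wit[of "(j,n-1)"]) (use h assms c in \<open>auto simp: NN_def diag_iff crosses_pair\<close>)
              qed
          next
            case False
            note c = c False
            show ?thesis
              proof (cases "j < b")
                case True
                note c = c True
                show ?thesis
                  by (rule wit[of "(i,j)"]) (use h assms c in \<open>auto simp: NN_def diag_iff crosses_pair\<close>)
              next
                case False
                note c = c False
                show ?thesis
                  proof (cases "b = j")
                    case True
                    note c = c True
                    show ?thesis
                      proof (cases "a < k - 1")
                        case True
                        note c = c True
                        show ?thesis
                          by (rule wit[of "(i,k-1)"]) (use h assms c in \<open>auto simp: NN_def diag_iff crosses_pair\<close>)
                      next
                        case False
                        note c = c False
                        show ?thesis
                          using h assms c by auto
                      qed
                  next
                    case False
                    note c = c False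
                    show ?thesis
                      proof (cases "a < k - 1")
                        case True
                        note c = c True
                        show ?thesis
                          by (rule wit[of "(k-1,j)"]) (use h assms c in \<open>auto simp: NN_def diag_iff crosses_pair\<close>)
                      next
                        case False
                        note c = c False
                        show ?thesis
                          proof (cases "b = k")
                            case True
                            note c = c True
                            show ?thesis
                              using h assms c by auto
                          next
                            case False
                            note c = c False
                            show ?thesis
                              by (rule wit[of "(k,j)"]) (use h assms c in \<open>auto simp: NN_def diag_iff crosses_pair\<close>)
                          qed
                      qed
                  qed
              qed
          qed
      qed
    qed

    then show "\<exists>g\<in>N. crosses f g" unfolding ab .
  qed
  ultimately show ?thesis by (rule not_blocker_witness)
qed

lemma sat2:
  assumes "1 \<le> p" "p < k" "k < q" "q < n" "p \<le> i" "i < k" "q \<le> j" "j < n"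
  shows "\<not> blocker n (Cset n p k q - {(i,j)})"
proof -
  define NN where "NN = {(0,j),(i,j),(i,k),(j,n-1),(0,i),(k,j),(i,k-1)}"
  define N where "N = NN \<inter> diagonals n"
  have "N \<subseteq> diagonals n" by (auto simp: N_def)
  moreover have "noncrossing N"
  proof -
    have "noncrossing NN" using assms unfolding NN_def noncrossing_def ball_simps crosses_pair
      by (intro conjI; arith)
    then show ?thesis by (auto simp: N_def noncrossing_def)
  qed
  moreover have "\<forall>f\<in>Cset n p k q - {(i,j)}. \<exists>g\<in>N. crosses f g"
  proof
    fix f assume f: "f \<in> Cset n p k q - {(i,j)}"
    obtain a b where ab: "f = (a,b)" by force
    have h: "a < k" "k \<le> b" "b < n" "(a,b) \<noteq> (i,j)" "a < p \<and> b < q \<or> p \<le> a \<and> q \<le> b"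
      using f ab assms by (auto simp: Cset_def)
    have wit: "\<exists>g\<in>N. crosses (a,b) g" if "g \<in> NN" "g \<in> diagonals n" "crosses (a,b) g" for g
      using that by (auto simp: N_def)
    have "\<exists>g\<in>N. crosses (a,b) g"
    proof -
      note c = TrueI
      show ?thesis
      proof (cases "j < b")
        case True
        note c = c True
        show ?thesis
          proof (cases "0 < a")
            case True
            note c = c True
            show ?thesis
              by (rule wit[of "(0,j)"]) (use h assms c in \<open>auto simp: NN_def diag_iff crosses_pair\<close>)
          next
            case False
            note c = c False
            show ?thesis
              proof (cases "b < n - 1")
                case True
                note c = c True
                show ?thesis
                  by (rule wit[of "(j,n-1)"]) (use h assms c in \<open>auto simp: NN_def diag_iff crosses_pair\<close>)
              next
                case False
                note c = c False
                show ?thesis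
                  using h assms c by auto
              qed
          qed
      next
        case False
        note c = c False
        show ?thesis
          proof (cases "b = j")
            case True
            note c = c True
            show ?thesis
              proof (cases "a < i")
                case True
                note c = c True
                show ?thesis
                  proof (cases "0 < a")
                    case True
                    note c = c True
                    show ?thesis
                      by (rule wit[of "(0,i)"]) (use h assms c in \<open>auto simp: NN_def diag_iff crosses_pair\<close>)
                  next
                    case False
                    note c = c False
                    show ?thesis
                      using h assms c by auto
                  qed
              next
                case False
                note c = c False
                show ?thesis
                  by (rule wit[of "(i,k)"]) (use h assms c in \<open>auto simp: NN_def diag_iff crosses_pair\<close>)
              qed
          next
            case False
            note c = c False
            show ?thesis
              proof (cases "a < i")
                case True
                note c = c True
                show ?thesis
                  by (rule wit[of "(i,j)"]) (use h assms c in \<open>auto simp: NN_def diag_iff crosses_pair\<close>)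
              next
                case False
                note c = c False
                show ?thesis
                  proof (cases "a = i")
                    case True
                    note c = c True
                    show ?thesis
                      proof (cases "k < b")
                        case True
                        note c = c True
                        show ?thesis
                          by (rule wit[of "(k,j)"]) (use h assms c in \<open>auto simp: NN_def diag_iff crosses_pair\<close>)
                      next
                        case False
                        note c = c False
                        show ?thesis
                          using h assms c by auto
                      qed
                  next
                    case False
                    note c = c False
                    show ?thesis
                      proof (cases "k < b")
                        case True
                        note c = c True
                        show ?thesis
                          by (rule wit[of "(i,k)"]) (use h assms c in \<open>auto simp: NN_def diag_iff crosses_pair\<close>)
                      next
                        case False
                        note c = c False
                        show ?thesis
                          proof (cases "a < k - 1")
                            case True
                            note c = c True
                            show ?thesis
                              by (rule wit[of "(i,k-1)"]) (use h assms c in \<open>auto simp: NN_def diag_iff crosses_pair\<close>)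
                          next
                            case False
                            note c = c False
                            show ?thesis
                              using h assms c by auto
                          qed
                      qed
                  qed
              qed
          qed
      qed
    qed

    then show "\<exists>g\<in>N. crosses f g" unfolding ab .
  qed
  ultimately show ?thesis by (rule not_blocker_witness)
qed



lemma cover_step:
  fixes n t :: nat
  assumes "n - 2 \<le> t" "n \<ge> 5"
  shows "2 \<le> x \<Longrightarrow> 2*x + 1 \<le> n \<Longrightarrow> t + 1 \<le> x * (n + 1 - 2*x) \<Longrightarrow>
    \<exists>y g. 2 \<le> y \<and> 2*y + 1 \<le> n \<and> 1 \<le> g \<and> g + 1 \<le> n + 1 - 2*y \<and> t = (y - 1) * (n + 1 - 2*y) + g"
proof (induction x)
  case 0 then show ?case by simp
next
  case (Suc x)
  define m where "m = n + 1 - 2 * Suc x"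
  have m: "n + 1 = 2 * Suc x + m" using Suc.prems(2) unfolding m_def by simp
  define P where "P = x * m"
  have tb: "t + 1 \<le> P + m" using Suc.prems(3) unfolding m_def[symmetric] P_def by simp
  show ?case
  proof (cases "P + 1 \<le> t")
    case True
    have e: "(Suc x - 1) * (n + 1 - 2 * Suc x) = P" unfolding P_def m_def by simp
    have "2 \<le> Suc x \<and> 2 * Suc x + 1 \<le> n \<and> 1 \<le> t - P \<and> t - P + 1 \<le> n + 1 - 2 * Suc x
       \<and> t = (Suc x - 1) * (n + 1 - 2 * Suc x) + (t - P)"
      unfolding e using Suc.prems(1,2) True tb unfolding m_def[symmetric] by linarith
    then show ?thesis by blast
  next
    case False
    then have tl: "t \<le> P" by simp
    show ?thesis
    proof (cases "x = 1")
      case True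
      then have "P = n - 3" unfolding P_def using m by simp
      then show ?thesis using tl assms by simp
    next
      case False
      then have x2: "2 \<le> x" using Suc.prems(1) by simp
      have e: "n + 1 - 2 * x = m + 2" using m by simp
      have "x * (n + 1 - 2 * x) = P + 2 * x" unfolding e P_def by (simp add: algebra_simps)
      then have "t + 1 \<le> x * (n + 1 - 2 * x)" using tl x2 by linarith
      moreover have "2 * x + 1 \<le> n" using Suc.prems(2) by simp
      ultimately show ?thesis using Suc.IH x2 by blast
    qed
  qed
qed

lemma top_bound:
  fixes n t :: nat
  assumes "n \<ge> 5" "8 * t + 11 \<le> n^2 + 2*n"
  shows "t + 1 \<le> ((n+3) div 4) * (n + 1 - 2*((n+3) div 4))"
proof -
  obtain r s where rs: "n = 4*r + s" "s < 4" using mod_div_decomp[of n 4]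
    by (metis mod_less_divisor zero_less_numeral add.commute mult.commute)
  consider "s = 0" | "s = 1" | "s = 2" | "s = 3" using rs(2) by linarith
  then show ?thesis
  proof cases
    case 1
    then have a: "(n+3) div 4 = r" "n + 1 - 2*r = 2*r+1" using rs by auto
    show ?thesis unfolding a using assms 1 rs by (simp add: power2_eq_square algebra_simps)
  next
    case 2
    then have a: "(n+3) div 4 = r+1" "n + 1 - 2*(r+1) = 2*r" using rs by auto
    show ?thesis unfolding a using assms 2 rs by (simp add: power2_eq_square algebra_simps)
  next
    case 3
    then have a: "(n+3) div 4 = r+1" "n + 1 - 2*(r+1) = 2*r+1" using rs by auto
    show ?thesis unfolding a using assms 3 rs by (simp add: power2_eq_square algebra_simps)
  next
    case 4
    then have a: "(n+3) div 4 = r+1" "n + 1 - 2*(r+1) = 2*r+2" using rs by auto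
    show ?thesis unfolding a using assms 4 rs by (simp add: power2_eq_square algebra_simps)
  qed
qed

lemma cover:
  fixes n t :: nat
  assumes "n \<ge> 5" "n - 2 \<le> t" "8 * t + 11 \<le> n^2 + 2*n"
  shows "\<exists>a b c d. 1 \<le> a \<and> 1 \<le> b \<and> 1 \<le> c \<and> 1 \<le> d \<and> a + b + c + d = n \<and> t = a * c + b * d"
proof -
  let ?x = "(n+3) div 4"
  have "2 \<le> ?x" "2 * ?x + 1 \<le> n" using assms(1) by auto
  then obtain y g where yg: "2 \<le> y" "2*y + 1 \<le> n" "1 \<le> g" "g + 1 \<le> n + 1 - 2*y"
      "t = (y - 1) * (n + 1 - 2*y) + g"
    using cover_step[OF assms(2,1)] top_bound[OF assms(1,3)] by blast
  define m where "m = n + 1 - 2*y"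
  have m: "n + 1 = 2*y + m" using yg(2) by (simp add: m_def)
  define z where "z = y - 1"
  define r where "r = m - g"
  have z: "y = z + 1" using yg(1) by (simp add: z_def)
  have r: "m = g + r" using yg(4) by (simp add: r_def m_def)
  have t: "t = z * m + g" using yg(5) by (simp add: z_def m_def)
  have "1 \<le> y" "1 \<le> r" "1 \<le> g" "1 \<le> z" using yg z r m by auto
  moreover have "y + r + g + z = n" using m z r by simp
  moreover have "t = y * g + r * z" unfolding t r z by (simp add: algebra_simps)
  ultimately show ?thesis by (intro exI[of _ y] exI[of _ r] exI[of _ g] exI[of _ z]; intro conjI) simp_all
qed


lemma family:
  fixes a b c d n :: nat
  assumes "1 \<le> a" "1 \<le> b" "1 \<le> c" "1 \<le> d" "a + b + c + d = n"
  shows "nt_blocker n (a * c + b * d) (Cset n a (a+b) (a+b+c))"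
proof -
  have h: "1 \<le> a" "a < a+b" "a+b < a+b+c" "a+b+c < n" using assms by auto
  have card: "card (Cset n a (a+b) (a+b+c)) = a * c + b * d"
    using C_card[OF h] assms by simp
  have fin: "finite (Cset n a (a+b) (a+b+c))"
    using C_diag[OF h] finite_diagonals by (rule finite_subset)
  have sat: "\<not> blocker n (Cset n a (a+b) (a+b+c) - {e})" if e: "e \<in> Cset n a (a+b) (a+b+c)" for e
  proof -
    obtain i j where ij: "e = (i,j)" by force
    from e consider "i < a \<and> a+b \<le> j \<and> j < a+b+c" | "a \<le> i \<and> i < a+b \<and> a+b+c \<le> j \<and> j < n"
      unfolding ij Cset_def by blast
    then show ?thesis
    proof cases
      case 1
      then show ?thesis unfolding ij using sat1[OF h] by blast
    next
      case 2
      then show ?thesis unfolding ij using sat2[OF h] by blast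
    qed
  qed
  show ?thesis
    unfolding nt_blocker_def saturated_blocker_def
    using C_blocker[OF h] card fin sat by blast
qed

theorem lemma3p3:
  fixes n t :: nat
  assumes "n \<ge> 5"
    and "n - 2 \<le> t"
    and "real t \<le> real n ^ 2 / 8 + real n / 4 - 11 / 8"
  shows "\<exists>B. nt_blocker n t B"
proof -
  have "8 * real t + 11 \<le> real n ^ 2 + 2 * real n" using assms(3) by linarith
  then have "real (8 * t + 11) \<le> real (n^2 + 2 * n)" by simp
  then have ineq: "8 * t + 11 \<le> n^2 + 2 * n" by (simp only: of_nat_le_iff)
  obtain a b c d where abcd: "1 \<le> a" "1 \<le> b" "1 \<le> c" "1 \<le> d" "a + b + c + d = n" "t = a * c + b * d"
    using cover[OF assms(1,2) ineq] by blast
  show ?thesis using family[OF abcd(1-5)] abcd(6) by blast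
qed

end
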